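(* Let $G$ be an arbitrary group and let $S$ be a nonempty finite subset of $G$. Then every complement $C$ of $S$ in $G$ (i.e. every nonempty $C\subseteq G$ with $SC=G$) contains a minimal complement of $S$ in $G$.
   Context: For nonempty subsets $A,B$ of a group $G$, $AB=\{ab: a\in A, b\in B\}$. A nonempty set $W'\subseteq G$ is a complement to a nonempty set $W\subseteq G$ if $WW'=G$; it is a minimal complement if moreover $W(W'\setminus\{w'\})\neq G$ for every $w'\in W'$, i.e. no proper subset of $W'$ is a complement to $W$. *)

theory Defs
  imports "HOL-Algebra.Group"
begin

definition set_prod :: "('a, 'b) monoid_scheme \<Rightarrow> 'a set \<Rightarrow> 'a set \<Rightarrow> 'a set" where
  "set_prod G A B = {a \<otimes>\<^bsub>G\<^esub> b | a b. a \<in> A \<and> b \<in> B}"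

definition is_complement :: "('a, 'b) monoid_scheme \<Rightarrow> 'a set \<Rightarrow> 'a set \<Rightarrow> bool" where
  "is_complement G W W' \<longleftrightarrow> W' \<noteq> {} \<and> W' \<subseteq> carrier G \<and> set_prod G W W' = carrier G"

definition is_minimal_complement :: "('a, 'b) monoid_scheme \<Rightarrow> 'a set \<Rightarrow> 'a set \<Rightarrow> bool" where
  "is_minimal_complement G W W' \<longleftrightarrow> is_complement G W W' \<and>
     (\<forall>w\<in>W'. set_prod G W (W' - {w}) \<noteq> carrier G)"

end

theory Submission
  imports Defs
begin

lemma chain_inter_complement:
  fixes G (structure)
  assumes grp: "group G" and fin: "finite S" and SG: "S \<subseteq> carrier G"
    and Kne: "K \<noteq> {}" and Kc: "\<forall>D\<in>K. is_complement G S D"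
    and ch: "\<forall>A\<in>K. \<forall>B\<in>K. A \<subseteq> B \<or> B \<subseteq> A"
  shows "is_complement G S (\<Inter>K)"
proof -
  interpret group G by (rule grp)
  obtain D1 where D1: "D1 \<in> K" using Kne by blast
  have sub: "\<Inter>K \<subseteq> carrier G" using D1 Kc unfolding is_complement_def by blast
  have cov: "g \<in> set_prod G S (\<Inter>K)" if g: "g \<in> carrier G" for g
  proof -
    define T where "T D = {s\<in>S. inv s \<otimes> g \<in> D}" for D
    have Tne: "T D \<noteq> {}" if "D \<in> K" for D
    proof -
      have "g \<in> set_prod G S D" using that Kc g unfolding is_complement_def by blast
      then obtain s d where sd: "s \<in> S" "d \<in> D" "g = s \<otimes> d" unfolding set_prod_def by blast
      have dG: "d \<in> carrier G" using sd that Kc unfolding is_complement_def by blast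
      have sG: "s \<in> carrier G" using sd SG by blast
      have "inv s \<otimes> g = d" using sd dG sG by (simp add: m_assoc[symmetric])
      then show ?thesis using sd unfolding T_def by blast
    qed
    have Tmono: "A \<subseteq> B \<Longrightarrow> T A \<subseteq> T B" for A B unfolding T_def by blast
    have fT: "finite (T D)" for D unfolding T_def using fin by simp
    obtain D0 where D0: "D0 \<in> K" "\<forall>D\<in>K. card (T D0) \<le> card (T D)"
      using ex_has_least_nat[of "\<lambda>D. D \<in> K" D1 "\<lambda>D. card (T D)"] D1 by blast
    have all: "T D0 \<subseteq> T D" if "D \<in> K" for D
    proof (cases "D0 \<subseteq> D")
      case True then show ?thesis using Tmono by blast
    next
      case False
      then have "D \<subseteq> D0" using ch that D0 by blast
      then have "T D \<subseteq> T D0" using Tmono by blast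
      moreover have "card (T D0) \<le> card (T D)" using D0 that by blast
      ultimately have "T D = T D0" using card_subset_eq[OF fT] by (meson antisym card_mono fT)
      then show ?thesis by simp
    qed
    obtain s where s: "s \<in> T D0" using Tne D0 by blast
    have sS: "s \<in> S" and sG: "s \<in> carrier G" using s SG unfolding T_def by auto
    have "inv s \<otimes> g \<in> \<Inter>K" using all s unfolding T_def by blast
    moreover have "g = s \<otimes> (inv s \<otimes> g)" using sG g by (simp add: m_assoc[symmetric])
    ultimately show ?thesis using sS unfolding set_prod_def by blast
  qed
  have "set_prod G S (\<Inter>K) \<subseteq> carrier G" using SG sub unfolding set_prod_def by auto
  with cov have eq: "set_prod G S (\<Inter>K) = carrier G" by blast
  have "\<Inter>K \<noteq> {}" using eq one_closed unfolding set_prod_def by blast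
  then show ?thesis using eq sub unfolding is_complement_def by blast
qed

theorem theorem1p1:
  fixes G (structure) and S C :: "'a set"
  assumes "group G"
    and "S \<noteq> {}" and "finite S" and "S \<subseteq> carrier G"
    and "is_complement G S C"
  shows "\<exists>M. M \<subseteq> C \<and> is_minimal_complement G S M"
proof -
  interpret group G by (rule assms(1))
  define A where "A = (\<lambda>D. C - D) ` {D. D \<subseteq> C \<and> is_complement G S D}"
  have "\<forall>Ch\<in>chains A. \<Union>Ch \<in> A"
  proof
    fix Ch assume Ch: "Ch \<in> chains A"
    show "\<Union>Ch \<in> A"
    proof (cases "Ch = {}")
      case True
      then have "\<Union>Ch = C - C" by simp
      then show ?thesis using assms(5) unfolding A_def by blast
    next
      case False
      define K where "K = (\<lambda>X. C - X) ` Ch"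
      have ChA: "Ch \<subseteq> A" and chs: "\<forall>X\<in>Ch. \<forall>Y\<in>Ch. X \<subseteq> Y \<or> Y \<subseteq> X"
        using Ch unfolding chains_def chain_subset_def by auto
      have inv: "\<forall>X\<in>Ch. C - (C - X) = X \<and> X \<subseteq> C" using ChA unfolding A_def by blast
      have Kc: "\<forall>D\<in>K. is_complement G S D"
      proof
        fix D assume "D \<in> K"
        then obtain X where X: "X \<in> Ch" "D = C - X" unfolding K_def by blast
        then obtain E where E: "X = C - E" "E \<subseteq> C" "is_complement G S E" using ChA unfolding A_def by blast
        have "D = E" using X E by blast
        then show "is_complement G S D" using E by simp
      qed
      have chK: "\<forall>P\<in>K. \<forall>Q\<in>K. P \<subseteq> Q \<or> Q \<subseteq> P" using chs unfolding K_def by blast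
      have "K \<noteq> {}" using False unfolding K_def by blast
      then have ic: "is_complement G S (\<Inter>K)"
        using chain_inter_complement[OF assms(1) assms(3) assms(4) _ Kc chK] by blast
      have "\<Inter>K \<subseteq> C" using \<open>K \<noteq> {}\<close> unfolding K_def by blast
      moreover have "\<Union>Ch = C - \<Inter>K" using inv False unfolding K_def by blast
      ultimately show ?thesis using ic unfolding A_def by blast
    qed
  qed
  from Zorn_Lemma[OF this] obtain M where M: "M \<in> A" "\<forall>X\<in>A. M \<subseteq> X \<longrightarrow> X = M" by blast
  then obtain D where D: "M = C - D" "D \<subseteq> C" "is_complement G S D" unfolding A_def by blast
  have "is_minimal_complement G S D"
    unfolding is_minimal_complement_def
  proof (intro conjI ballI D(3))
    fix w assume w: "w \<in> D"
    show "set_prod G S (D - {w}) \<noteq> carrier G"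
    proof
      assume eq: "set_prod G S (D - {w}) = carrier G"
      have ne: "D - {w} \<noteq> {}" using eq one_closed unfolding set_prod_def by blast
      have "is_complement G S (D - {w})" using eq ne D(3) unfolding is_complement_def by blast
      then have "C - (D - {w}) \<in> A" using D(2) unfolding A_def by blast
      moreover have "M \<subseteq> C - (D - {w})" using D by blast
      ultimately have "C - (D - {w}) = C - D" using M D by blast
      then show False using w D(2) by blast
    qed
  qed
  then show ?thesis using D by blast
qed

end
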